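(* Let $\Sigma_{g,m,n}$ be a compact oriented surface of genus $g$ with $m$ boundary components labeled $0$ and $n$ boundary components labeled $2$, and assume $(g,n)$ is such that the right-hand side below is defined ($g+n\ge 1$ or $(g,n)=(0,0)$). Then $$\dim V_{\Sigma_{g,m,n}}=5^{\frac{g-1}{2}}\left\{\left(\tfrac{1+\sqrt5}{2}\right)^{g+n-1}+(-1)^{g-1}\left(\tfrac{1-\sqrt5}{2}\right)^{g+n-1}\right\}.$$
   Context: The Fibonacci TQFT ($SO(3)$ Chern–Simons theory at $r=5$) assigns to each compact oriented surface $\Sigma$ whose boundary components are parametrized and labeled by elements of $\{0,2\}$ a finite-dimensional Hilbert space $V_\Sigma$, with: $V_{\Sigma_1\sqcup\Sigma_2}=V_{\Sigma_1}\otimes V_{\Sigma_2}$; for a simple closed curve $f$ in $\Sigma$, $V_\Sigma=V_{\Sigma_{f,0}}\oplus V_{\Sigma_{f,2}}$, where $\Sigma_{f,a}$ is $\Sigma$ cut along $f$ with both new boundary components labeled $a$; a disk labeled $a$ has $\dim=\delta_{0a}$; an annulus labeled $a,b$ has $\dim=\delta_{ab}$; a genus-0 surface with three boundary components labeled $a,b,c$ has $\dim=0$ if $a+b+c=2$ and $\dim=1$ otherwise. *)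

theory Defs
  imports Complex_Main
begin

text \<open>A connected compact oriented surface with labelled boundary is determined up to
  label-preserving homeomorphism by its genus g, the number m of boundary components
  labelled 0 and the number n labelled 2.  A function D g m n is an admissible
  dimension function for the Fibonacci TQFT if it satisfies the stated axioms:
  disk, annulus and pair-of-pants values, cutting along a non-separating curve, and
  cutting along a separating curve (which, by multiplicativity under disjoint union,
  yields a sum of products of the dimensions of the two pieces).\<close>

definition fib_tqft_dim :: "(nat \<Rightarrow> nat \<Rightarrow> nat \<Rightarrow> nat) \<Rightarrow> bool" where
  "fib_tqft_dim D \<longleftrightarrow>
     \<comment> \<open>disk labelled a: dim = delta_{0a}\<close>
     D 0 1 0 = 1 \<and> D 0 0 1 = 0 \<and>
     \<comment> \<open>annulus labelled a,b: dim = delta_{ab}\<close>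
     D 0 2 0 = 1 \<and> D 0 1 1 = 0 \<and> D 0 0 2 = 1 \<and>
     \<comment> \<open>pair of pants labelled a,b,c: dim 0 iff a+b+c = 2, i.e. exactly one label 2\<close>
     D 0 3 0 = 1 \<and> D 0 2 1 = 0 \<and> D 0 1 2 = 1 \<and> D 0 0 3 = 1 \<and>
     \<comment> \<open>cutting along a non-separating simple closed curve\<close>
     (\<forall>g m n. D (Suc g) m n = D g (m + 2) n + D g m (n + 2)) \<and>
     \<comment> \<open>cutting along a separating simple closed curve\<close>
     (\<forall>g1 g2 m1 m2 n1 n2.
        D (g1 + g2) (m1 + m2) (n1 + n2) =
          D g1 (m1 + 1) n1 * D g2 (m2 + 1) n2 + D g1 m1 (n1 + 1) * D g2 m2 (n2 + 1))"

end

theory Submission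
  imports Defs
begin

lemma sqrt5_facts: "sqrt 5 * sqrt 5 = (5::real)" "1 + sqrt 5 \<noteq> (0::real)" "1 - sqrt 5 \<noteq> (0::real)"
  "sqrt 5 \<noteq> (0::real)" "(1 + sqrt 5)/2 \<noteq> (0::real)" "(1 - sqrt 5)/2 \<noteq> (0::real)"
proof -
  have "sqrt 5 \<ge> (0::real)" by simp
  then show "1 + sqrt 5 \<noteq> (0::real)" by linarith
  then show "(1 + sqrt 5)/2 \<noteq> (0::real)" by simp
qed simp_all

lemma phi_sq: fixes s p :: real assumes "s*s = 5" "p = (1+s)/2" shows "p*p = p+1"
proof - have "4*(p*p) = 4*(p+1)" unfolding assms(2) using assms(1)
    by (simp add: algebra_simps power2_eq_square diff_divide_distrib add_divide_distrib) then show ?thesis by simp qed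
lemma psi_sq: fixes s p :: real assumes "s*s = 5" "p = (1-s)/2" shows "p*p = p+1"
proof - have "4*(p*p) = 4*(p+1)" unfolding assms(2) using assms(1)
    by (simp add: algebra_simps power2_eq_square diff_divide_distrib add_divide_distrib) then show ?thesis by simp qed
lemma phi_sq2: fixes s p :: real assumes "s*s = 5" "p = (1+s)/2" shows "p*p = s*p - 1"
proof - have "4*(p*p) = 4*(s*p - 1)" unfolding assms(2) using assms(1)
    by (simp add: algebra_simps power2_eq_square diff_divide_distrib add_divide_distrib) then show ?thesis by simp qed
lemma psi_sq2: fixes s p :: real assumes "s*s = 5" "p = (1-s)/2" shows "p*p = - s*p - 1"
proof - have "4*(p*p) = 4*(- s*p - 1)" unfolding assms(2) using assms(1)
    by (simp add: algebra_simps power2_eq_square diff_divide_distrib add_divide_distrib) then show ?thesis by simp qed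

lemma rhs_eq:
  fixes g n :: nat
  shows "5 powr ((real g - 1) / 2) *
      (((1 + sqrt 5) / 2) powi (int g + int n - 1)
       + (-1) powi (int g - 1) * ((1 - sqrt 5) / 2) powi (int g + int n - 1))
    = sqrt 5^g / sqrt 5 * (((1+sqrt 5)/2)^(g+n) / ((1+sqrt 5)/2)
      - (-1)^g * ((1-sqrt 5)/2)^(g+n) / ((1-sqrt 5)/2))"
proof -
  have p0: "(1+sqrt 5)/2 \<noteq> (0::real)" using sqrt5_facts by simp
  have q0: "(1-sqrt 5)/2 \<noteq> (0::real)" by simp
  have a: "5 powr ((real g - 1) / 2) = sqrt 5^g / sqrt 5"
  proof -
    have "5 powr ((real g - 1) / 2) = 5 powr (real g / 2) / 5 powr (1/2)"
      by (simp add: powr_diff[symmetric] diff_divide_distrib)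
    also have "5 powr (real g / 2) = (5 powr (1/2)) ^ g"
      by (simp add: powr_realpow[symmetric] powr_powr)
    finally show ?thesis by (simp add: powr_half_sqrt)
  qed
  have b: "x powi (int g + int n - 1) = x^(g+n) / x" if "x \<noteq> 0" for x :: real
    using that by (simp add: power_int_diff power_int_of_nat[symmetric])
  have c: "(-1::real) powi (int g - 1) = - ((-1)^g)"
  proof -
    have "(-1::real) powi (int g - 1) = (-1) powi (int g) / (-1) powi 1"
      by (rule power_int_diff) simp
    then show ?thesis by simp
  qed
  show ?thesis
    unfolding a c b[OF p0] b[OF q0]
    by (simp only: mult_minus_left times_divide_eq_right diff_conv_add_uminus minus_divide_left)
qed

definition R :: "nat \<Rightarrow> nat \<Rightarrow> real" where
  "R g n = sqrt 5^g / sqrt 5 * (((1+sqrt 5)/2)^(g+n) / ((1+sqrt 5)/2)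
      - (-1)^g * ((1-sqrt 5)/2)^(g+n) / ((1-sqrt 5)/2))"

lemma R_00: "R 0 0 = 1"
proof -
  define s :: real where "s = sqrt 5"
  have a: "s*s = 5" "1 + s \<noteq> 0" "1 - s \<noteq> 0" "s \<noteq> 0" unfolding s_def using sqrt5_facts by auto
  have "s^0/s * (((1+s)/2)^(0+0) / ((1+s)/2) - (-1)^0 * ((1-s)/2)^(0+0) / ((1-s)/2)) = 1"
    using a by (simp add: field_simps)
  then show ?thesis unfolding s_def R_def .
qed

lemma R_01: "R 0 1 = 0"
  unfolding R_def using sqrt5_facts by simp

lemma R_0rec: "R 0 (n+2) = R 0 n + R 0 (n+1)"
proof -
  define s :: real where "s = sqrt 5"
  have s2: "s * s = 5" "1 - s \<noteq> 0" "1 + s \<noteq> 0" and sp: "s \<noteq> 0" unfolding s_def using sqrt5_facts by auto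
  define p where "p = (1+s)/2"
  define q where "q = (1-s)/2"
  have pp: "p*p = p + 1" using phi_sq[OF s2(1) p_def] .
  have qq: "q*q = q + 1" using psi_sq[OF s2(1) q_def] .
  have p0: "p \<noteq> 0" unfolding p_def using s2 by simp
  have q0: "q \<noteq> 0" unfolding q_def using s2 by simp
  have RR: "R 0 k = (p^k/p - q^k/q)/s" for k unfolding R_def p_def q_def s_def by simp
  define A where "A = p^n"
  define B where "B = q^n"
  have e1: "p^(n+1) = A*p" "q^(n+1) = B*q" "p^(n+2) = A*(p*p)" "q^(n+2) = B*(q*q)"
    unfolding A_def B_def by (simp_all add: power_add power2_eq_square)
  have "R 0 (n+2) = (A*(p+1)/p - B*(q+1)/q)/s" unfolding RR e1 pp qq by simp
  also have "\<dots> = (A/p + A - (B/q + B))/s" using p0 q0 by (simp add: field_simps)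
  also have "\<dots> = R 0 n + R 0 (n+1)" unfolding RR e1 A_def B_def using p0 q0 sp
    by (simp add: field_simps)
  finally show ?thesis .
qed

lemma R_grec: "R (Suc g) n = R g n + R g (n+2)"
proof -
  define s :: real where "s = sqrt 5"
  have s2: "s * s = 5" "1 - s \<noteq> 0" "1 + s \<noteq> 0" and sp: "s \<noteq> 0" unfolding s_def using sqrt5_facts by auto
  define p where "p = (1+s)/2"
  define q where "q = (1-s)/2"
  have pp: "p*p = s*p - 1" using phi_sq2[OF s2(1) p_def] .
  have qq: "q*q = - s*q - 1" using psi_sq2[OF s2(1) q_def] .
  have p0: "p \<noteq> 0" unfolding p_def using s2 by simp
  have q0: "q \<noteq> 0" unfolding q_def using s2 by simp
  have RR: "R g' k = s^g'/s * (p^(g'+k)/p - (-1)^g' * q^(g'+k)/q)" for g' k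
    unfolding R_def p_def q_def s_def by simp
  define A where "A = p^(g+n)"
  define B where "B = q^(g+n)"
  define e :: real where "e = (-1)^g"
  have e1: "p^(Suc g+n) = A*p" "q^(Suc g+n) = B*q" "p^(g+(n+2)) = A*(p*p)" "q^(g+(n+2)) = B*(q*q)"
    "(-1::real)^(Suc g) = - e" "s^Suc g = s^g * s"
    unfolding A_def B_def e_def by (simp_all add: power_add power2_eq_square)
  have "R (Suc g) n = s^g/s * (s*A + e*s*B)" unfolding RR e1 using p0 q0 sp
    by (simp add: field_simps)
  moreover have h2: "R g n + R g (n+2) = s^g/s * (A/p + A*(p*p)/p - e*(B/q + B*(q*q)/q))"
    unfolding RR e1 A_def B_def e_def using p0 q0 sp by (simp add: field_simps)
  moreover have h3: "A/p + A*(p*p)/p = s*A" unfolding pp using p0 by (simp add: field_simps)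
  moreover have h4: "B/q + B*(q*q)/q = - s*B" unfolding qq using q0 by (simp add: field_simps)
  ultimately have "R g n + R g (n+2) = s^g/s * (s*A - e*(-s*B))" "R (Suc g) n = s^g/s * (s*A + e*s*B)"
    by simp_all
  then show ?thesis by (simp add: algebra_simps)
qed

lemma sepD: assumes "fib_tqft_dim D" shows
  "D (g1 + g2) (m1 + m2) (n1 + n2) =
          D g1 (m1 + 1) n1 * D g2 (m2 + 1) n2 + D g1 m1 (n1 + 1) * D g2 m2 (n2 + 1)"
  using assms unfolding fib_tqft_dim_def by blast

lemma D_m: assumes "fib_tqft_dim D" shows "D g m n = D g 0 n"
proof (induction m)
  case (Suc m)
  have "D g m n = D g (m+1) n * D 0 1 0 + D g m (n+1) * D 0 0 1"
    using sepD[OF assms, of g 0 m 0 n 0] by simp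
  moreover have "D 0 1 0 = 1" "D 0 0 1 = 0" using assms unfolding fib_tqft_dim_def by auto
  ultimately show ?case using Suc by simp
qed simp

lemma D_0rec: assumes "fib_tqft_dim D" shows "D 0 0 (n+2) = D 0 0 n + D 0 0 (n+1)"
proof -
  have "D 0 0 (n+2) = D 0 1 n * D 0 1 2 + D 0 0 (n+1) * D 0 0 3"
    using sepD[OF assms, of 0 0 0 0 n 2] by simp
  moreover have "D 0 1 2 = 1" "D 0 0 3 = 1" using assms unfolding fib_tqft_dim_def by auto
  ultimately show ?thesis using D_m[OF assms, of 0 1 n] by simp
qed

lemma D_grec: assumes "fib_tqft_dim D" shows "D (Suc g) 0 n = D g 0 n + D g 0 (n+2)"
proof -
  have "D (Suc g) 0 n = D g (0 + 2) n + D g 0 (n+2)"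
    using assms unfolding fib_tqft_dim_def by blast
  then show ?thesis using D_m[OF assms, of g 2 n] by (simp add: numeral_2_eq_2)
qed

lemma D_R: assumes "fib_tqft_dim D" shows "real (D g 0 n) = R g n"
proof (induction g arbitrary: n)
  case 0
  show ?case
  proof (induction n rule: nat_less_induct)
    case (1 n)
    show ?case
    proof (cases n)
      case 0 then show ?thesis using assms R_00 sepD[OF assms, of 0 0 0 0 0 0]
        unfolding fib_tqft_dim_def by simp
    next
      case (Suc k)
      show ?thesis
      proof (cases k)
        case 0 then show ?thesis using Suc assms R_01 unfolding fib_tqft_dim_def by simp
      next
        case (Suc j)
        have "n = j + 2" using \<open>n = Suc k\<close> Suc by simp
        then show ?thesis using 1 D_0rec[OF assms, of j] R_0rec[of j] by simp
      qed
    qed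
  qed
next
  case (Suc g)
  then show ?case using D_grec[OF assms] R_grec by simp
qed

theorem lemma6p1:
  fixes D :: "nat \<Rightarrow> nat \<Rightarrow> nat \<Rightarrow> nat" and g m n :: nat
  assumes "fib_tqft_dim D"
  assumes "g + n \<ge> 1 \<or> (g = 0 \<and> n = 0)"
  shows "real (D g m n) =
    5 powr ((real g - 1) / 2) *
      (((1 + sqrt 5) / 2) powi (int g + int n - 1)
       + (-1) powi (int g - 1) * ((1 - sqrt 5) / 2) powi (int g + int n - 1))"
  unfolding rhs_eq D_m[OF assms(1), of g m n] D_R[OF assms(1)] R_def by (rule refl)

end
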